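(* For all $n\ge1$, $$B_n(q)=\sum_{w\in S_n}(-1)^{\ell(w)}q^{\beta(w)}=\prod_{k=1}^{n-1}(1-q^k)^{n-k}.$$
   Context: For $w\in S_n$, $\ell(w)=\#\{(i,j): i<j,\ w(i)>w(j)\}$ is the inversion number. The bigrassmannian statistic of $w$ is $\beta(w)=\sum_{i,j=1}^n\min(i,j)-\sum_{i,j=1}^n\widetilde w(i,j)$, where $\widetilde w(i,j)=\#\{p\le i : w(p)\le j\}$ is the corner sum matrix of the permutation matrix of $w$; equivalently $\beta(w)=\sum_{i=1}^n\frac12(i-w(i))^2$. *)

theory Defs
  imports "HOL-Combinatorics.Permutations"
begin

text \<open>Permutations of [n] = {1..n} are functions nat => nat with w permutes {1..n}.\<close>

definition inversions :: "nat \<Rightarrow> (nat \<Rightarrow> nat) \<Rightarrow> nat" where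
  "inversions n w = card {(i, j). i \<in> {1..n} \<and> j \<in> {1..n} \<and> i < j \<and> w j < w i}"

definition corner_sum :: "(nat \<Rightarrow> nat) \<Rightarrow> nat \<Rightarrow> nat \<Rightarrow> nat" where
  "corner_sum w i j = card {p \<in> {1..i}. w p \<le> j}"

text \<open>Bigrassmannian statistic (always a nonnegative integer).\<close>
definition bigrass :: "nat \<Rightarrow> (nat \<Rightarrow> nat) \<Rightarrow> nat" where
  "bigrass n w = nat ((\<Sum>i=1..n. \<Sum>j=1..n. int (min i j))
                     - (\<Sum>i=1..n. \<Sum>j=1..n. int (corner_sum w i j)))"

end

theory Submission
  imports Defs "Jordan_Normal_Form.Determinant"
begin


definition invset :: "nat \<Rightarrow> (nat \<Rightarrow> nat) \<Rightarrow> (nat \<times> nat) set" where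
  "invset n w = {(i, j). i \<in> {1..n} \<and> j \<in> {1..n} \<and> i < j \<and> w j < w i}"

lemma inversions_invset: "inversions n w = card (invset n w)"
  unfolding inversions_def invset_def by simp

lemma finite_invset: "finite (invset n w)"
  by (rule finite_subset[of _ "{1..n} \<times> {1..n}"]) (auto simp: invset_def)

lemma mono_chain:
  assumes "\<And>k. i \<le> k \<Longrightarrow> k < j \<Longrightarrow> (w::nat\<Rightarrow>nat) k \<le> w (Suc k)" "i \<le> j"
  shows "w i \<le> w j"
  using assms(2,1)
proof (induction j rule: dec_induct)
  case base then show ?case by simp
next
  case (step j) then show ?case by (meson le_trans less_Suc_eq)
qed

lemma descent_exists:
  assumes "inversions n w \<noteq> 0"
  shows "\<exists>k. 1 \<le> k \<and> Suc k \<le> n \<and> w (Suc k) < w k"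
proof (rule ccontr)
  assume H: "\<not> ?thesis"
  from assms obtain i j where ij: "(i, j) \<in> invset n w"
    unfolding inversions_invset by (metis card.empty ex_in_conv prod.exhaust)
  hence "i \<in> {1..n}" "j \<in> {1..n}" "i < j" "w j < w i" by (auto simp: invset_def)
  moreover have "w i \<le> w j"
  proof (rule mono_chain[of i j w])
    fix k assume k: "i \<le> k" "k < j"
    have "1 \<le> k" "Suc k \<le> n" using k \<open>i \<in> {1..n}\<close> \<open>j \<in> {1..n}\<close> by auto
    thus "w k \<le> w (Suc k)" using H leI by blast
  qed (use \<open>i<j\<close> in simp)
  ultimately show False by simp
qed

lemma tau_iff:
  assumes "1 \<le> k" "Suc k \<le> n" "w (Suc k) < w k"
  shows "(transpose k (Suc k) a, transpose k (Suc k) b) \<in> invset n (w \<circ> transpose k (Suc k))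
     \<longleftrightarrow> (a, b) \<in> invset n w \<and> (a, b) \<noteq> (k, Suc k)"
proof -
  have tt: "transpose k (Suc k) (transpose k (Suc k) x) = x" for x by simp
  show ?thesis
    unfolding invset_def using assms
    apply (cases "a = k"; cases "a = Suc k"; cases "b = k"; cases "b = Suc k")
    apply (auto simp: transpose_def)
    done
qed

lemma card_swap:
  assumes "1 \<le> k" "Suc k \<le> n" "w (Suc k) < w k"
  shows "inversions n w = Suc (inversions n (w \<circ> transpose k (Suc k)))"
proof -
  define f where "f = (\<lambda>(a::nat, b::nat). (transpose k (Suc k) a, transpose k (Suc k) b))"
  have ff: "f (f x) = x" for x unfolding f_def by (cases x) simp
  have inj: "inj f" by (metis ff injI)
  have "invset n w - {(k, Suc k)} = f ` invset n (w \<circ> transpose k (Suc k))"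
  proof (intro equalityI subsetI)
    fix x assume "x \<in> invset n w - {(k, Suc k)}"
    hence "f x \<in> invset n (w \<circ> transpose k (Suc k))"
      using tau_iff[OF assms, of "fst x" "snd x"] unfolding f_def by (cases x) auto
    thus "x \<in> f ` invset n (w \<circ> transpose k (Suc k))" by (metis ff imageI)
  next
    fix x assume "x \<in> f ` invset n (w \<circ> transpose k (Suc k))"
    then obtain y where y: "y \<in> invset n (w \<circ> transpose k (Suc k))" "x = f y" by auto
    hence "f x \<in> invset n (w \<circ> transpose k (Suc k))" using ff by simp
    thus "x \<in> invset n w - {(k, Suc k)}"
      using tau_iff[OF assms, of "fst x" "snd x"] unfolding f_def by (cases x) auto
  qed
  moreover have "(k, Suc k) \<in> invset n w" using assms by (auto simp: invset_def)
  ultimately have "card (invset n w) = Suc (card (f ` invset n (w \<circ> transpose k (Suc k))))"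
    by (metis card_Suc_Diff1 finite_invset)
  thus ?thesis unfolding inversions_invset using card_image[OF inj_on_subset[OF inj]] by simp
qed

lemma sign_inversions:
  assumes "w permutes {1..n}"
  shows "sign w = (-1) ^ inversions n w"
  using assms
proof (induction "inversions n w" arbitrary: w)
  case 0
  have "w = id"
  proof (rule permutes_natset_ge[OF 0(2)], rule ballI)
    fix i assume "i \<in> {1..n}"
    have "1 \<le> i \<Longrightarrow> i \<le> n \<Longrightarrow> i \<le> w i" for i
    proof (induction i rule: nat_induct_at_least)
      case base
      thus ?case using permutes_in_image[OF 0(2)] by auto
    next
      case (Suc m)
      have "(m, Suc m) \<notin> invset n w" using 0(1) finite_invset[of n w] by (auto simp: inversions_invset)
      hence "\<not> w (Suc m) < w m" using Suc by (auto simp: invset_def)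
      moreover have "w (Suc m) \<noteq> w m" using permutes_inj[OF 0(2)] by (metis inj_eq n_not_Suc_n)
      ultimately show ?case using Suc by simp
    qed
    thus "i \<le> w i" using \<open>i \<in> {1..n}\<close> by simp
  qed
  thus ?case using 0(1) by simp
next
  case (Suc m)
  then obtain k where k: "1 \<le> k" "Suc k \<le> n" "w (Suc k) < w k"
    using descent_exists[of n w] by auto
  let ?t = "transpose k (Suc k)"
  have tp: "?t permutes {1..n}" using k by (intro permutes_swap_id) auto
  have wp: "w \<circ> ?t permutes {1..n}" using tp Suc(3) by (rule permutes_compose)
  have "inversions n (w \<circ> ?t) = m" using card_swap[OF k] Suc(2) by simp
  hence IH: "sign (w \<circ> ?t) = (-1) ^ m" using Suc(1) wp by simp
  have "sign (w \<circ> ?t) = sign w * sign ?t"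
    by (rule sign_compose) (use Suc(3) tp in \<open>auto intro: permutes_imp_permutation\<close>)
  hence "sign w = - sign (w \<circ> ?t)" by (simp add: sign_swap_id)
  thus ?case using IH Suc(2)[symmetric] by simp
qed



lemma sum_two_deltas:
  fixes c :: "'a::comm_ring_1"
  assumes "j < Suc n"
  shows "(\<Sum>k = 0..<Suc n. y ^ k * (if k = j then 1 else if Suc k = j then c else 0))
        = (if j = 0 then 1 else y ^ (j - 1) * (y + c))"
proof (cases j)
  case 0
  have "(\<Sum>k = 0..<Suc n. y ^ k * (if k = j then 1 else if Suc k = j then c else 0))
      = (\<Sum>k = 0..<Suc n. (if k = 0 then 1 else 0))"
    by (rule sum.cong) (auto simp: 0)
  also have "\<dots> = 1" by simp
  finally show ?thesis using 0 by simp
next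
  case (Suc j')
  have "(\<Sum>k = 0..<Suc n. y ^ k * (if k = j then 1 else if Suc k = j then c else 0))
      = (\<Sum>k = 0..<Suc n. (if k = j then y ^ j else 0) + (if k = j' then y ^ j' * c else 0))"
    by (rule sum.cong) (auto simp: Suc)
  also have "\<dots> = y ^ j + y ^ j' * c"
    using assms Suc by (simp add: sum.distrib)
  finally show ?thesis using Suc by (simp add: algebra_simps)
qed

lemma prod_list_map_upt: "prod_list (map f [0..<n]) = (\<Prod>i<n. f i)"
  by (induction n) auto

lemma vandermonde:
  fixes x :: "nat \<Rightarrow> 'a::comm_ring_1"
  shows "det (mat n n (\<lambda>(i,j). x i ^ j)) = (\<Prod>j<n. \<Prod>i<j. (x j - x i))"
proof (induction n arbitrary: x)
  case 0
  then show ?case by (simp add: det_dim_zero)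
next
  case (Suc n)
  define V where "V = mat (Suc n) (Suc n) (\<lambda>(i,j). x i ^ j)"
  define U where "U = mat (Suc n) (Suc n) (\<lambda>(i,j). if i = j then 1 else if Suc i = j then - x 0 else (0::'a))"
  define B where "B = mat (Suc n) (Suc n) (\<lambda>(i,j). if j = 0 then 1 else x i ^ (j - 1) * (x i - x 0))"
  have V: "V \<in> carrier_mat (Suc n) (Suc n)" and U: "U \<in> carrier_mat (Suc n) (Suc n)"
    and B: "B \<in> carrier_mat (Suc n) (Suc n)" by (auto simp: V_def U_def B_def)
  have VU: "V * U = B"
  proof (rule eq_matI)
    fix i j assume ij: "i < dim_row B" "j < dim_col B"
    hence "(V * U) $$ (i, j) = (\<Sum>k = 0..<Suc n. x i ^ k * (if k = j then 1 else if Suc k = j then - x 0 else 0))"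
      by (simp add: V_def U_def B_def scalar_prod_def)
    also have "\<dots> = B $$ (i, j)" using ij by (subst sum_two_deltas) (auto simp: B_def)
    finally show "(V * U) $$ (i, j) = B $$ (i, j)" .
  qed (auto simp: V_def U_def B_def)
  have detU: "det U = 1"
  proof -
    have "upper_triangular U" by (auto simp: upper_triangular_def U_def)
    hence "det U = prod_list (diag_mat U)" using det_upper_triangular U by blast
    also have "diag_mat U = map (\<lambda>_. 1) [0..<Suc n]" by (auto simp: diag_mat_def U_def)
    finally show ?thesis by (induction n) simp_all
  qed
  have "det B = det V"
    using det_mult[OF V U] VU detU by simp
  have "det B = (\<Sum>j<Suc n. B $$ (0, j) * cofactor B 0 j)"
    by (rule laplace_expansion_row[OF B]) simp
  also have "\<dots> = B $$ (0, 0) * cofactor B 0 0"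
    by (subst sum.lessThan_Suc_shift) (simp add: B_def)
  also have "\<dots> = det (mat_delete B 0 0)" by (simp add: B_def cofactor_def)
  finally have dB: "det B = det (mat_delete B 0 0)" .
  define D where "D = mat n n (\<lambda>(i,j). if i = j then x (Suc i) - x 0 else (0::'a))"
  define V' where "V' = mat n n (\<lambda>(i,j). x (Suc i) ^ j)"
  have D: "D \<in> carrier_mat n n" and V': "V' \<in> carrier_mat n n" by (auto simp: D_def V'_def)
  have "mat_delete B 0 0 = D * V'"
  proof (rule eq_matI)
    fix i j assume ij: "i < dim_row (D * V')" "j < dim_col (D * V')"
    hence "(D * V') $$ (i, j) = (\<Sum>k = 0..<n. (if i = k then x (Suc i) - x 0 else 0) * x (Suc k) ^ j)"
      by (simp add: V'_def D_def scalar_prod_def)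
    also have "\<dots> = (\<Sum>k = 0..<n. (if k = i then (x (Suc i) - x 0) * x (Suc i) ^ j else 0))"
      by (rule sum.cong) auto
    also have "\<dots> = mat_delete B 0 0 $$ (i, j)" using ij
      by (simp add: mat_delete_def B_def D_def V'_def mult.commute)
    finally show "mat_delete B 0 0 $$ (i, j) = (D * V') $$ (i, j)" by simp
  qed (auto simp: mat_delete_def B_def D_def V'_def)
  hence "det (mat_delete B 0 0) = det D * det V'" using det_mult[OF D V'] by simp
  moreover have "det D = (\<Prod>i<n. x (Suc i) - x 0)"
  proof -
    have "upper_triangular D" by (auto simp: upper_triangular_def D_def)
    hence "det D = prod_list (diag_mat D)" using det_upper_triangular D by blast
    also have "diag_mat D = map (\<lambda>i. x (Suc i) - x 0) [0..<n]" by (auto simp: diag_mat_def D_def)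
    finally show ?thesis by (simp add: prod_list_map_upt)
  qed
  moreover have "det V' = (\<Prod>j<n. \<Prod>i<j. (x (Suc j) - x (Suc i)))"
    using Suc.IH[of "\<lambda>i. x (Suc i)"] by (simp add: V'_def)
  moreover have "(\<Prod>j<Suc n. \<Prod>i<j. (x j - x i))
     = (\<Prod>i<n. x (Suc i) - x 0) * (\<Prod>j<n. \<Prod>i<j. (x (Suc j) - x (Suc i)))"
    by (simp add: prod.lessThan_Suc_shift prod.distrib del: prod.lessThan_Suc)
  ultimately show ?case using dB \<open>det B = det V\<close> by (simp add: V_def)
qed



lemma bij_Suc: "bij_betw Suc {0..<n} {1..n}"
  by (auto simp: bij_betw_def image_iff intro!: inj_onI)

lemma alt_sum_det:
  fixes y :: "nat \<Rightarrow> 'a::comm_ring_1"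
  shows "(\<Sum>w \<in> {w. w permutes {1..n}}. of_int (sign w) * (\<Prod>p\<in>{1..n}. y p ^ w p))
    = (\<Prod>i<n. y (Suc i)) * det (mat n n (\<lambda>(i,j). y (Suc i) ^ j))"
proof -
  let ?S0 = "{0..<n}" and ?S1 = "{1..n}"
  define \<Phi> where "\<Phi> = (\<lambda>\<sigma> x. if x \<in> ?S1 then Suc (\<sigma> (inv_into ?S0 Suc x)) else x)"
  have bij: "bij_betw \<Phi> {\<sigma>. \<sigma> permutes ?S0} {w. w permutes ?S1}"
    unfolding \<Phi>_def by (rule bij_betw_permutations[OF bij_Suc])
  have "(\<Sum>w \<in> {w. w permutes ?S1}. of_int (sign w) * (\<Prod>p\<in>?S1. y p ^ w p))
     = (\<Sum>\<sigma> \<in> {\<sigma>. \<sigma> permutes ?S0}. of_int (sign (\<Phi> \<sigma>)) * (\<Prod>p\<in>?S1. y p ^ \<Phi> \<sigma> p))"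
    by (rule sum.reindex_bij_betw[OF bij, symmetric])
  also have "\<dots> = (\<Sum>\<sigma> \<in> {\<sigma>. \<sigma> permutes ?S0}. (\<Prod>i<n. y (Suc i)) * (of_int (sign \<sigma>) * (\<Prod>i=0..<n. mat n n (\<lambda>(i,j). y (Suc i) ^ j) $$ (i, \<sigma> i))))"
  proof (rule sum.cong[OF refl])
    fix \<sigma> assume "\<sigma> \<in> {\<sigma>. \<sigma> permutes ?S0}"
    hence \<sigma>: "\<sigma> permutes ?S0" by simp
    have map: "\<Phi> \<sigma> = map_permutation ?S0 Suc \<sigma>"
      unfolding \<Phi>_def map_permutation_def restrict_id_def using bij_Suc[of n]
      by (auto simp: bij_betw_def fun_eq_iff)
    have sg: "sign (\<Phi> \<sigma>) = sign \<sigma>"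
      unfolding map by (rule sign_map_permutation) (use \<sigma> in auto)
    have "(\<Prod>p\<in>?S1. y p ^ \<Phi> \<sigma> p) = (\<Prod>i\<in>?S0. y (Suc i) ^ \<Phi> \<sigma> (Suc i))"
      by (rule prod.reindex_bij_betw[OF bij_Suc, symmetric])
    also have "\<dots> = (\<Prod>i\<in>?S0. y (Suc i) * y (Suc i) ^ \<sigma> i)"
    proof (rule prod.cong[OF refl])
      fix i assume i: "i \<in> ?S0"
      have "inv_into ?S0 Suc (Suc i) = i" using i by (simp add: inv_into_f_eq)
      thus "y (Suc i) ^ \<Phi> \<sigma> (Suc i) = y (Suc i) * y (Suc i) ^ \<sigma> i" using i
        by (simp add: \<Phi>_def)
    qed
    also have "\<dots> = (\<Prod>i<n. y (Suc i)) * (\<Prod>i=0..<n. mat n n (\<lambda>(i,j). y (Suc i) ^ j) $$ (i, \<sigma> i))"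
    proof -
      have "(\<Prod>i=0..<n. mat n n (\<lambda>(i,j). y (Suc i) ^ j) $$ (i, \<sigma> i)) = (\<Prod>i\<in>?S0. y (Suc i) ^ \<sigma> i)"
        by (rule prod.cong[OF refl]) (use permutes_in_image[OF \<sigma>] in auto)
      thus ?thesis by (simp add: prod.distrib atLeast0LessThan)
    qed
    finally show "of_int (sign (\<Phi> \<sigma>)) * (\<Prod>p\<in>?S1. y p ^ \<Phi> \<sigma> p)
      = (\<Prod>i<n. y (Suc i)) * (of_int (sign \<sigma>) * (\<Prod>i=0..<n. mat n n (\<lambda>(i,j). y (Suc i) ^ j) $$ (i, \<sigma> i)))"
      using sg by (simp add: ac_simps)
  qed
  also have "\<dots> = (\<Prod>i<n. y (Suc i)) * det (mat n n (\<lambda>(i,j). y (Suc i) ^ j))"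
    by (subst det_def'[of _ n]) (auto simp: sum_distrib_left)
  finally show ?thesis .
qed



lemma corner_sum_ind:
  assumes "i \<le> n"
  shows "corner_sum w i j = (\<Sum>p\<in>{1..n}. (if p \<le> i then 1 else 0) * (if w p \<le> j then 1 else 0))"
proof -
  have "{p \<in> {1..i}. w p \<le> j} = {p \<in> {1..n}. p \<le> i \<and> w p \<le> j}" using assms by auto
  hence "corner_sum w i j = card {p \<in> {1..n}. p \<le> i \<and> w p \<le> j}" by (simp add: corner_sum_def)
  also have "\<dots> = (\<Sum>p\<in>{1..n}. if p \<le> i \<and> w p \<le> j then 1 else 0)"
    by (simp add: sum.inter_filter[symmetric])
  also have "\<dots> = (\<Sum>p\<in>{1..n}. (if p \<le> i then 1 else 0) * (if w p \<le> j then 1 else 0))"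
    by (rule sum.cong) auto
  finally show ?thesis .
qed

lemma count_ge:
  assumes "1 \<le> p"
  shows "(\<Sum>i=1..n. (if p \<le> i then 1 else 0::nat)) = n + 1 - p"
proof -
  have "(\<Sum>i=1..n. (if p \<le> i then 1 else 0::nat)) = card {i\<in>{1..n}. p \<le> i}"
    by (simp add: sum.inter_filter[symmetric])
  also have "{i\<in>{1..n}. p \<le> i} = {p..n}" using assms by auto
  finally show ?thesis by simp
qed

lemma corner_total:
  assumes w: "w permutes {1..n}"
  shows "(\<Sum>i=1..n. \<Sum>j=1..n. corner_sum w i j) = (\<Sum>p=1..n. (n + 1 - p) * (n + 1 - w p))"
proof -
  have "(\<Sum>i=1..n. \<Sum>j=1..n. corner_sum w i j)
      = (\<Sum>i=1..n. \<Sum>j=1..n. \<Sum>p\<in>{1..n}. (if p \<le> i then 1 else 0) * (if w p \<le> j then 1 else 0))"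
    by (intro sum.cong refl corner_sum_ind) auto
  also have "\<dots> = (\<Sum>p\<in>{1..n}. (\<Sum>i=1..n. (if p \<le> i then 1 else 0)) * (\<Sum>j=1..n. (if w p \<le> j then 1 else 0)))"
  proof -
    have "(\<Sum>i=1..n. \<Sum>j=1..n. \<Sum>p\<in>{1..n}. (if p \<le> i then 1 else 0) * (if w p \<le> j then 1 else 0))
      = (\<Sum>i=1..n. \<Sum>p\<in>{1..n}. \<Sum>j=1..n. (if p \<le> i then 1 else 0) * (if w p \<le> j then 1 else (0::nat)))"
      by (rule sum.cong[OF refl], rule sum.swap)
    also have "\<dots> = (\<Sum>p\<in>{1..n}. \<Sum>i=1..n. \<Sum>j=1..n. (if p \<le> i then 1 else 0) * (if w p \<le> j then 1 else (0::nat)))"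
      by (rule sum.swap)
    also have "\<dots> = (\<Sum>p\<in>{1..n}. (\<Sum>i=1..n. (if p \<le> i then 1 else 0)) * (\<Sum>j=1..n. (if w p \<le> j then 1 else 0)))"
      by (rule sum.cong[OF refl]) (rule sum_product[symmetric])
    finally show ?thesis .
  qed
  also have "\<dots> = (\<Sum>p=1..n. (n + 1 - p) * (n + 1 - w p))"
  proof (rule sum.cong[OF refl])
    fix p assume p: "p \<in> {1..n}"
    hence "w p \<in> {1..n}" using permutes_in_image[OF w] by auto
    thus "(\<Sum>i=1..n. (if p \<le> i then 1 else 0)) * (\<Sum>j=1..n. (if w p \<le> j then 1 else 0)) = (n + 1 - p) * (n + 1 - w p)"
      using p count_ge[of p n] count_ge[of "w p" n] by (simp only: atLeastAtMost_iff)
  qed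
  finally show ?thesis .
qed

lemma min_total:
  "(\<Sum>i=1..n. \<Sum>j=1..n. min i j :: nat) = (\<Sum>p=1..n. (n + 1 - p) * (n + 1 - p))"
proof -
  have "corner_sum id i j = min i j" for i j
  proof -
    have "{p \<in> {1..i}. id p \<le> j} = {1..min i j}" by auto
    thus ?thesis by (simp add: corner_sum_def)
  qed
  hence "(\<Sum>i=1..n. \<Sum>j=1..n. min i j) = (\<Sum>i=1..n. \<Sum>j=1..n. corner_sum id i j)" by simp
  also have "\<dots> = (\<Sum>p=1..n. (n + 1 - p) * (n + 1 - p))" using corner_total[OF permutes_id] by simp
  finally show ?thesis .
qed

lemma bigrass_eq:
  assumes w: "w permutes {1..n}"
  shows "bigrass n w + (\<Sum>p=1..n. (n + 1 - p) * p) = (\<Sum>p=1..n. (n + 1 - p) * w p)"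
proof -
  have wp: "p \<in> {1..n} \<Longrightarrow> w p \<in> {1..n}" for p using permutes_in_image[OF w] by auto
  define A :: int where "A = (\<Sum>i=1..n. \<Sum>j=1..n. int (min i j))"
  define B :: int where "B = (\<Sum>i=1..n. \<Sum>j=1..n. int (corner_sum w i j))"
  define a :: "nat \<Rightarrow> int" where "a p = 1 + int n - int p" for p
  have A: "A = (\<Sum>p=1..n. a p * a p)"
  proof -
    have "A = int (\<Sum>i=1..n. \<Sum>j=1..n. min i j)" by (simp add: A_def)
    also have "\<dots> = int (\<Sum>p=1..n. (n + 1 - p) * (n + 1 - p))" by (simp only: min_total)
    also have "\<dots> = (\<Sum>p=1..n. a p * a p)"
      unfolding of_nat_sum by (rule sum.cong) (auto simp: a_def of_nat_diff add.commute)
    finally show ?thesis .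
  qed
  have B: "B = (\<Sum>p=1..n. a p * (1 + int n - int (w p)))"
  proof -
    have "B = int (\<Sum>i=1..n. \<Sum>j=1..n. corner_sum w i j)" by (simp add: B_def)
    also have "\<dots> = int (\<Sum>p=1..n. (n + 1 - p) * (n + 1 - w p))" by (simp only: corner_total[OF w])
    also have "\<dots> = (\<Sum>p=1..n. a p * (1 + int n - int (w p)))"
      unfolding of_nat_sum
    proof (rule sum.cong[OF refl])
      fix p assume p: "p \<in> {1..n}"
      hence "w p \<le> n" "p \<le> n" using wp by auto
      thus "int ((n + 1 - p) * (n + 1 - w p)) = a p * (1 + int n - int (w p))"
        by (simp add: a_def of_nat_diff)
    qed
    finally show ?thesis .
  qed
  define T :: int where "T = (\<Sum>p=1..n. a p * int (w p))"
  define K :: int where "K = (\<Sum>p=1..n. a p * int p)"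
  have "A - B = (\<Sum>p=1..n. a p * a p - a p * (1 + int n - int (w p)))"
    unfolding A B by (rule sum_subtractf[symmetric])
  also have "\<dots> = (\<Sum>p=1..n. a p * int (w p) - a p * int p)"
    by (rule sum.cong) (auto simp: a_def algebra_simps)
  also have "\<dots> = T - K" unfolding T_def K_def by (rule sum_subtractf)
  finally have AB: "A - B = T - K" .
  have s1: "(\<Sum>p=1..n. int (w p)) = (\<Sum>p=1..n. int p)"
    using sum.permute[OF w, of int] by (simp add: o_def)
  have s2: "(\<Sum>p=1..n. int (w p) * int (w p)) = (\<Sum>p=1..n. int p * int p)"
    using sum.permute[OF w, of "\<lambda>p. int p * int p"] by (simp add: o_def)
  have "T - K = (\<Sum>p=1..n. (1 + int n) * int (w p) - (1 + int n) * int p + (int p * int p - int p * int (w p)))"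
    unfolding T_def K_def sum_subtractf[symmetric] by (rule sum.cong) (auto simp: a_def algebra_simps)
  also have "\<dots> = (1 + int n) * ((\<Sum>p=1..n. int (w p)) - (\<Sum>p=1..n. int p))
       + ((\<Sum>p=1..n. int p * int p) - (\<Sum>p=1..n. int p * int (w p)))"
    by (simp only: sum.distrib sum_subtractf sum_distrib_left right_diff_distrib)
  also have "\<dots> = (\<Sum>p=1..n. int p * int p) - (\<Sum>p=1..n. int p * int (w p))"
    using s1 by simp
  finally have TK1: "T - K = (\<Sum>p=1..n. int p * int p) - (\<Sum>p=1..n. int p * int (w p))" .
  have "(\<Sum>p=1..n. (int p - int (w p)) * (int p - int (w p)))
      = (\<Sum>p=1..n. (int p * int p - int p * int (w p)) + (int (w p) * int (w p) - int p * int (w p)))"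
    by (rule sum.cong) (auto simp: algebra_simps)
  also have "\<dots> = ((\<Sum>p=1..n. int p * int p) - (\<Sum>p=1..n. int p * int (w p)))
      + ((\<Sum>p=1..n. int (w p) * int (w p)) - (\<Sum>p=1..n. int p * int (w p)))"
    by (simp only: sum.distrib sum_subtractf)
  also have "\<dots> = 2 * (T - K)" using s2 TK1 by simp
  finally have sq: "(\<Sum>p=1..n. (int p - int (w p)) * (int p - int (w p))) = 2 * (T - K)" .
  moreover have "(\<Sum>p=1..n. (int p - int (w p)) * (int p - int (w p))) \<ge> 0"
    by (intro sum_nonneg) simp
  ultimately have TK: "T - K \<ge> 0" by simp
  have ABp: "A - B \<ge> 0" using AB TK by simp
  have "int (bigrass n w) = A - B" using ABp unfolding bigrass_def A_def B_def by simp
  hence "int (bigrass n w) + K = T" using AB by simp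
  moreover have "K = int (\<Sum>p=1..n. (n + 1 - p) * p)"
    unfolding K_def of_nat_sum by (intro sum.cong) (auto simp: a_def of_nat_diff)
  moreover have "T = int (\<Sum>p=1..n. (n + 1 - p) * w p)"
    unfolding T_def of_nat_sum by (intro sum.cong) (auto simp: a_def of_nat_diff)
  ultimately show ?thesis by linarith
qed

lemma triangle_prod:
  fixes f :: "nat \<Rightarrow> 'b::comm_monoid_mult"
  shows "(\<Prod>j<n. \<Prod>i<j. f (j - i)) = (\<Prod>k=1..n-1. f k ^ (n - k))"
proof (induction n)
  case 0
  then show ?case by simp
next
  case (Suc n)
  have rev: "(\<Prod>i<n. f (n - i)) = (\<Prod>k=1..n. f k)"
    by (rule prod.reindex_bij_witness[of _ "\<lambda>k. n - k" "\<lambda>i. n - i"]) auto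
  have ext: "(\<Prod>k=1..n-1. f k ^ (n - k)) = (\<Prod>k=1..n. f k ^ (n - k))"
  proof (cases n)
    case 0 then show ?thesis by simp
  next
    case (Suc m)
    then show ?thesis by (simp add: prod.cl_ivl_Suc)
  qed
  have "(\<Prod>j<Suc n. \<Prod>i<j. f (j - i)) = (\<Prod>j<n. \<Prod>i<j. f (j - i)) * (\<Prod>i<n. f (n - i))"
    by simp
  also have "\<dots> = (\<Prod>k=1..n. f k ^ (n - k)) * (\<Prod>k=1..n. f k)" using Suc.IH rev ext by simp
  also have "\<dots> = (\<Prod>k=1..n. f k ^ (Suc n - k))"
    unfolding prod.distrib[symmetric] by (rule prod.cong) (auto simp: Suc_diff_le mult.commute)
  finally show ?case by simp
qed

lemma monom_cancel:
  fixes p q :: "'a::comm_ring_1 poly"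
  assumes "p * monom 1 K = q * monom 1 K"
  shows "p = q"
proof (rule poly_eqI)
  fix m
  have "coeff (monom 1 K * p) (m + K) = coeff (monom 1 K * q) (m + K)"
    using assms by (simp add: mult.commute)
  thus "coeff p m = coeff q m" by (simp add: coeff_monom_mult)
qed

lemma poly_identity:
  assumes "n \<ge> 1"
  shows "(\<Sum>w \<in> {w. w permutes {1..n}}. (-1) ^ inversions n w * (monom 1 1 :: 'a::comm_ring_1 poly) ^ bigrass n w)
         = (\<Prod>k=1..n-1. (1 - monom 1 1 ^ k) ^ (n - k))"
proof -
  define X :: "'a poly" where "X = monom 1 1"
  define K where "K = (\<Sum>p=1..n. (n + 1 - p) * p)"
  define y where "y p = X ^ (n + 1 - p)" for p
  have Xm: "X ^ m = monom 1 m" for m by (simp add: X_def monom_power)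
  have step1: "X ^ bigrass n w * X ^ K = (\<Prod>p\<in>{1..n}. y p ^ w p)" if w: "w permutes {1..n}" for w
  proof -
    have "X ^ bigrass n w * X ^ K = X ^ (\<Sum>p=1..n. (n + 1 - p) * w p)"
      using bigrass_eq[OF w] by (simp add: K_def power_add[symmetric])
    also have "\<dots> = (\<Prod>p\<in>{1..n}. y p ^ w p)"
      by (simp add: power_sum y_def power_mult)
    finally show ?thesis .
  qed
  have "(\<Sum>w \<in> {w. w permutes {1..n}}. (-1) ^ inversions n w * X ^ bigrass n w) * X ^ K
      = (\<Sum>w \<in> {w. w permutes {1..n}}. of_int (sign w) * (\<Prod>p\<in>{1..n}. y p ^ w p))"
    unfolding sum_distrib_right
  proof (rule sum.cong[OF refl])
    fix w assume "w \<in> {w. w permutes {1..n}}"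
    hence w: "w permutes {1..n}" by simp
    show "(-1) ^ inversions n w * X ^ bigrass n w * X ^ K = of_int (sign w) * (\<Prod>p\<in>{1..n}. y p ^ w p)"
      using step1[OF w] sign_inversions[OF w] by (simp add: mult.assoc)
  qed
  also have "\<dots> = (\<Prod>i<n. y (Suc i)) * det (mat n n (\<lambda>(i,j). y (Suc i) ^ j))"
    by (rule alt_sum_det)
  also have "\<dots> = (\<Prod>i<n. y (Suc i)) * (\<Prod>j<n. \<Prod>i<j. (y (Suc j) - y (Suc i)))"
    by (simp add: vandermonde)
  also have "\<dots> = X ^ (\<Sum>i<n. n - i) * (X ^ (\<Sum>j<n. (n - j) * j) * (\<Prod>j<n. \<Prod>i<j. (1 - X ^ (j - i))))"
  proof -
    have a: "(\<Prod>i<n. y (Suc i)) = X ^ (\<Sum>i<n. n - i)" by (simp add: y_def power_sum)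
    have b: "(\<Prod>j<n. \<Prod>i<j. (y (Suc j) - y (Suc i))) = (\<Prod>j<n. \<Prod>i<j. X ^ (n - j) * (1 - X ^ (j - i)))"
    proof (intro prod.cong refl)
      fix j i assume "j \<in> {..<n}" "i \<in> {..<j}"
      hence "n - i = (n - j) + (j - i)" by auto
      thus "y (Suc j) - y (Suc i) = X ^ (n - j) * (1 - X ^ (j - i))"
        by (simp add: y_def power_add algebra_simps)
    qed
    have c: "(\<Prod>j<n. \<Prod>i<j. X ^ (n - j) * (1 - X ^ (j - i)))
       = X ^ (\<Sum>j<n. (n - j) * j) * (\<Prod>j<n. \<Prod>i<j. (1 - X ^ (j - i)))"
      by (simp add: prod.distrib power_sum power_mult[symmetric] mult.commute)
    show ?thesis using a b c by simp
  qed
  also have "\<dots> = X ^ K * (\<Prod>k=1..n-1. (1 - X ^ k) ^ (n - k))"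
  proof -
    have "(\<Sum>i<n. n - i) + (\<Sum>j<n. (n - j) * j) = (\<Sum>j<n. (n - j) * Suc j)"
      by (simp add: sum.distrib[symmetric] algebra_simps)
    also have "\<dots> = K"
      unfolding K_def
      by (rule sum.reindex_bij_witness[of _ "\<lambda>p. p - 1" Suc]) auto
    finally have "(\<Sum>i<n. n - i) + (\<Sum>j<n. (n - j) * j) = K" .
    hence e: "X ^ K = X ^ (\<Sum>i<n. n - i) * X ^ (\<Sum>j<n. (n - j) * j)" by (simp add: power_add[symmetric])
    show ?thesis using triangle_prod[of "\<lambda>k. 1 - X ^ k" n] by (simp add: e mult.assoc)
  qed
  finally have "(\<Sum>w \<in> {w. w permutes {1..n}}. (-1) ^ inversions n w * X ^ bigrass n w) * monom 1 K
      = (\<Prod>k=1..n-1. (1 - X ^ k) ^ (n - k)) * monom 1 K"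
    by (simp add: Xm mult.commute)
  hence "(\<Sum>w \<in> {w. w permutes {1..n}}. (-1) ^ inversions n w * X ^ bigrass n w)
      = (\<Prod>k=1..n-1. (1 - X ^ k) ^ (n - k))" by (rule monom_cancel)
  thus ?thesis by (simp add: X_def)
qed

theorem theorem5p3:
  fixes q :: "'a :: comm_ring_1" and n :: nat
  assumes "n \<ge> 1"
  shows "(\<Sum>w \<in> {w. w permutes {1..n}}. (-1) ^ inversions n w * q ^ bigrass n w)
         = (\<Prod>k=1..n-1. (1 - q ^ k) ^ (n - k))"
proof -
  have "poly (\<Sum>w \<in> {w. w permutes {1..n}}. (-1) ^ inversions n w * (monom 1 1 :: 'a poly) ^ bigrass n w) q
      = poly (\<Prod>k=1..n-1. (1 - monom 1 1 ^ k) ^ (n - k)) q"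
    by (subst poly_identity[OF assms]) (rule refl)
  thus ?thesis by (simp add: poly_sum poly_prod poly_monom)
qed

end
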